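(* Let $A$ be a combination matrix of the weakly-connected form described in the context, with $W=T_{SR}(I-T_{RR})^{-1}$, and let $\mathcal{A}=A\otimes I_M$ and $\mathcal{W}=W\otimes I_M$. For vectors $w_1^\star,\dots,w_S^\star\in\mathbb{R}^M$ (the Pareto solutions of the sub-networks of group $S$) let $\omega^\star=\mathrm{col}\{\mathbb{1}_{N_1}\otimes w_1^\star,\dots,\mathbb{1}_{N_S}\otimes w_S^\star\}\in\mathbb{R}^{N_{gS}M}$, $\omega^\bullet=\mathcal{W}^{\mathsf T}\omega^\star\in\mathbb{R}^{N_{gR}M}$ and $\omega_\infty=\mathrm{col}\{\omega^\star,\omega^\bullet\}\in\mathbb{R}^{NM}$. Then $\omega_\infty=\mathcal{A}^{\mathsf T}\omega_\infty$. Moreover, $\omega_\infty$ is the unique solution $x\in\mathbb{R}^{NM}$ of $x=\mathcal{A}^{\mathsf T}x$ whose first $N_{gS}M$ entries equal $\omega^\star$.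
   Context: $N$ agents are partitioned into sub-networks $1,\dots,S+R$ ($S\ge 1$), sub-network $j$ having $N_j$ agents; agents of sub-networks $1,\dots,S$ (group $S$, $N_{gS}=N_1+\cdots+N_S$ agents) come first, then those of sub-networks $S+1,\dots,S+R$ (group $R$, $N_{gR}$ agents). The combination matrix $A=[a_{\ell k}]$ is nonnegative, left-stochastic ($A^{\mathsf T}\mathbb{1}=\mathbb{1}$), and of the block form $A=\begin{bmatrix}T_{SS}&T_{SR}\\0&T_{RR}\end{bmatrix}$, where $T_{SS}=\mathrm{blockdiag}\{A_1,\dots,A_S\}$ with each $A_s\in\mathbb{R}^{N_s\times N_s}$ left-stochastic and primitive, and $T_{RR}$ is block upper triangular with diagonal blocks $A_{S+1},\dots,A_{S+R}$; each $A_r$ ($r>S$) is the nonnegative irreducible matrix of weights internal to a connected sub-network $r$ that receives information from outside it, so that at least one column of $A_r$ sums to strictly less than one. (Under these conditions $I-T_{RR}$ is invertible.) $\mathrm{col}\{\cdot\}$ denotes vertical stacking and $\otimes$ the Kronecker product. *)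

theory Defs
  imports "Jordan_Normal_Form.Gauss_Jordan_Elimination"
begin

definition kron_mat :: "'a::times mat \<Rightarrow> 'a mat \<Rightarrow> 'a mat" where
  "kron_mat A B = mat (dim_row A * dim_row B) (dim_col A * dim_col B)
     (\<lambda>(i,j). A $$ (i div dim_row B, j div dim_col B) * B $$ (i mod dim_row B, j mod dim_col B))"

definition kron_vec :: "'a::times vec \<Rightarrow> 'a vec \<Rightarrow> 'a vec" where
  "kron_vec v u = vec (dim_vec v * dim_vec u) (\<lambda>i. v $ (i div dim_vec u) * u $ (i mod dim_vec u))"

definition ones_vec :: "nat \<Rightarrow> 'a::one vec" where
  "ones_vec n = vec n (\<lambda>_. 1)"

definition vcol :: "'a::zero vec list \<Rightarrow> 'a vec" where
  "vcol vs = foldr (\<lambda>v w. v @\<^sub>v w) vs (vec 0 (\<lambda>_. 0))"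

(* offset of sub-network j (0-based) among the agents: N_0 + ... + N_{j-1} *)
definition offs :: "(nat \<Rightarrow> nat) \<Rightarrow> nat \<Rightarrow> nat" where
  "offs Nsz j = (\<Sum>i<j. Nsz i)"

definition subblock :: "'a mat \<Rightarrow> (nat \<Rightarrow> nat) \<Rightarrow> nat \<Rightarrow> 'a mat" where
  "subblock A Nsz j = mat (Nsz j) (Nsz j) (\<lambda>(a,b). A $$ (offs Nsz j + a, offs Nsz j + b))"

definition nonneg_mat :: "real mat \<Rightarrow> bool" where
  "nonneg_mat B \<longleftrightarrow> (\<forall>i<dim_row B. \<forall>j<dim_col B. B $$ (i,j) \<ge> 0)"

definition left_stochastic :: "real mat \<Rightarrow> bool" where
  "left_stochastic B \<longleftrightarrow> dim_row B = dim_col B \<and> nonneg_mat B \<and>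
     (\<forall>k<dim_col B. (\<Sum>l<dim_row B. B $$ (l,k)) = 1)"

definition primitive_mat :: "real mat \<Rightarrow> bool" where
  "primitive_mat B \<longleftrightarrow> dim_row B = dim_col B \<and> nonneg_mat B \<and>
     (\<exists>m. \<forall>i<dim_row B. \<forall>j<dim_row B. (B ^\<^sub>m m) $$ (i,j) > 0)"

definition irreducible_mat :: "real mat \<Rightarrow> bool" where
  "irreducible_mat B \<longleftrightarrow> dim_row B = dim_col B \<and> nonneg_mat B \<and>
     (\<forall>i<dim_row B. \<forall>j<dim_row B. \<exists>m. (B ^\<^sub>m m) $$ (i,j) > 0)"

definition T_SR :: "'a mat \<Rightarrow> nat \<Rightarrow> nat \<Rightarrow> 'a mat" where
  "T_SR A NgS NgR = mat NgS NgR (\<lambda>(i,k). A $$ (i, NgS + k))"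

definition T_RR :: "'a mat \<Rightarrow> nat \<Rightarrow> nat \<Rightarrow> 'a mat" where
  "T_RR A NgS NgR = mat NgR NgR (\<lambda>(i,k). A $$ (NgS + i, NgS + k))"

definition W_mat :: "real mat \<Rightarrow> nat \<Rightarrow> nat \<Rightarrow> real mat" where
  "W_mat A NgS NgR = T_SR A NgS NgR * the (mat_inverse (1\<^sub>m NgR - T_RR A NgS NgR))"

end

theory Submission
  imports Defs "Jordan_Normal_Form.Determinant"
begin

lemma offs_Suc: "offs Nsz (Suc i) = offs Nsz i + Nsz i"
  by (simp add: offs_def)

lemma offs_mono: "i \<le> j \<Longrightarrow> offs Nsz i \<le> offs Nsz j"
  unfolding offs_def by (rule sum_mono2) auto

definition blk :: "(nat \<Rightarrow> nat) \<Rightarrow> nat \<Rightarrow> nat" where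
  "blk Nsz p = (LEAST i. p < offs Nsz (Suc i))"

lemma blk_props:
  assumes "p < offs Nsz n"
  shows "blk Nsz p < n" "offs Nsz (blk Nsz p) \<le> p" "p < offs Nsz (Suc (blk Nsz p))"
proof -
  have n: "n > 0" using assms by (cases n) (auto simp: offs_def)
  have ex: "p < offs Nsz (Suc (n - 1))" using assms n by simp
  show 3: "p < offs Nsz (Suc (blk Nsz p))" unfolding blk_def by (rule LeastI[of "\<lambda>i. p < offs Nsz (Suc i)", OF ex])
  have "blk Nsz p \<le> n - 1" unfolding blk_def by (rule Least_le[of "\<lambda>i. p < offs Nsz (Suc i)", OF ex])
  then show "blk Nsz p < n" using n by simp
  show "offs Nsz (blk Nsz p) \<le> p"
  proof (cases "blk Nsz p")
    case 0 then show ?thesis by (simp add: offs_def)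
  next
    case (Suc k)
    have "k < blk Nsz p" using Suc by simp
    then have "\<not> p < offs Nsz (Suc k)" unfolding blk_def by (rule not_less_Least)
    then show ?thesis using Suc by simp
  qed
qed

lemma blk_eq:
  assumes "offs Nsz i \<le> p" "p < offs Nsz (Suc i)"
  shows "blk Nsz p = i"
  unfolding blk_def
proof (rule Least_equality)
  show "p < offs Nsz (Suc i)" by fact
  fix y assume "p < offs Nsz (Suc y)"
  show "i \<le> y"
  proof (rule ccontr)
    assume "\<not> i \<le> y"
    then have "offs Nsz (Suc y) \<le> offs Nsz i" by (intro offs_mono) simp
    then show False using assms \<open>p < offs Nsz (Suc y)\<close> by simp
  qed
qed

lemma sum_split_mult: fixes R M :: nat shows "(\<Sum>j<R*M. f j) = (\<Sum>q<R. \<Sum>t<M. (f (q*M+t) :: 'a::comm_monoid_add))"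
proof (induction R)
  case 0 then show ?case by simp
next
  case (Suc R)
  have "(\<Sum>j<Suc R*M. f j) = (\<Sum>j<R*M. f j) + (\<Sum>j\<in>{R*M..<R*M+M}. f j)"
    by (simp add: add.commute sum.atLeastLessThan_concat[symmetric] lessThan_atLeast0)
  also have "(\<Sum>j\<in>{R*M..<R*M+M}. f j) = (\<Sum>t<M. f (R*M+t))"
    using sum.shift_bounds_nat_ivl[of f 0 "R*M" M] by (simp add: lessThan_atLeast0 add.commute)
  finally show ?case using Suc by simp
qed

lemma kron_tmult:
  fixes B :: "real mat"
  assumes B: "B \<in> carrier_mat r c" and x: "x \<in> carrier_vec (r*M)" and p: "p < c" and m: "m < M"
  shows "(transpose_mat (kron_mat B (1\<^sub>m M)) *\<^sub>v x) $ (p*M+m) = (\<Sum>q<r. B$$(q,p) * x$(q*M+m))"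
proof -
  let ?K = "kron_mat B (1\<^sub>m M)"
  have dK: "dim_row ?K = r*M" "dim_col ?K = c*M" using B by (auto simp: kron_mat_def)
  have pm: "p*M+m < c*M"
  proof -
    have "p*M+m < (p+1)*M" using m by simp
    also have "\<dots> \<le> c*M" using p by (intro mult_right_mono) auto
    finally show ?thesis .
  qed
  have "(transpose_mat ?K *\<^sub>v x) $ (p*M+m) = (\<Sum>j<r*M. ?K $$ (j, p*M+m) * x $ j)"
    using dK pm x by (simp add: scalar_prod_def lessThan_atLeast0)
  also have "\<dots> = (\<Sum>q<r. \<Sum>t<M. ?K $$ (q*M+t, p*M+m) * x $ (q*M+t))"
    by (rule sum_split_mult)
  also have "\<dots> = (\<Sum>q<r. \<Sum>t<M. (if t = m then B$$(q,p) * x$(q*M+m) else 0))"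
  proof (intro sum.cong refl)
    fix q t assume q: "q \<in> {..<r}" and t: "t \<in> {..<M}"
    have qt: "q*M+t < r*M"
    proof -
      have "q*M+t < (q+1)*M" using t by simp
      also have "\<dots> \<le> r*M" using q by (intro mult_right_mono) auto
      finally show ?thesis .
    qed
    show "?K $$ (q*M+t, p*M+m) * x $ (q*M+t) = (if t = m then B$$(q,p) * x$(q*M+m) else 0)"
      using qt pm t m B by (auto simp: kron_mat_def)
  qed
  also have "\<dots> = (\<Sum>q<r. B$$(q,p) * x$(q*M+m))"
    using m by simp
  finally show ?thesis .
qed

lemma vcol_append: "vcol (xs @ ys) = vcol xs @\<^sub>v vcol ys"
proof (induction xs)
  case Nil
  show ?case by (intro eq_vecI) (auto simp: vcol_def)
next
  case (Cons v xs)
  have "vcol ((v # xs) @ ys) = v @\<^sub>v vcol (xs @ ys)" by (simp add: vcol_def)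
  also have "\<dots> = v @\<^sub>v (vcol xs @\<^sub>v vcol ys)" using Cons by simp
  also have "\<dots> = (v @\<^sub>v vcol xs) @\<^sub>v vcol ys" by (intro eq_vecI) auto
  finally show ?case by (simp add: vcol_def)
qed

lemma vcol_single: "vcol [v] = v"
  by (intro eq_vecI) (auto simp: vcol_def)

lemma omega_star:
  fixes w :: "nat \<Rightarrow> real vec"
  assumes "\<forall>s<S. w s \<in> carrier_vec M"
  shows "dim_vec (vcol (map (\<lambda>s. kron_vec (ones_vec (Nsz s)) (w s)) [0..<S])) = offs Nsz S * M \<and>
    (\<forall>p<offs Nsz S. \<forall>m<M. vcol (map (\<lambda>s. kron_vec (ones_vec (Nsz s)) (w s)) [0..<S]) $ (p*M+m) = w (blk Nsz p) $ m)"
  using assms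
proof (induction S)
  case 0
  then show ?case by (simp add: vcol_def offs_def)
next
  case (Suc S)
  let ?F = "\<lambda>s. kron_vec (ones_vec (Nsz s)) (w s)"
  let ?v = "vcol (map ?F [0..<S])"
  have IH: "dim_vec ?v = offs Nsz S * M"
    "\<And>p m. p<offs Nsz S \<Longrightarrow> m<M \<Longrightarrow> ?v $ (p*M+m) = w (blk Nsz p) $ m"
    using Suc by auto
  have wS: "dim_vec (w S) = M" using Suc.prems by auto
  have eq: "vcol (map ?F [0..<Suc S]) = ?v @\<^sub>v ?F S"
    by (simp add: vcol_append vcol_single)
  have dF: "dim_vec (?F S) = Nsz S * M" using wS by (simp add: kron_vec_def ones_vec_def)
  show ?case
  proof (intro conjI allI impI)
    show "dim_vec (vcol (map ?F [0..<Suc S])) = offs Nsz (Suc S) * M"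
      unfolding eq using IH dF by (simp add: offs_Suc algebra_simps)
    fix p m assume p: "p < offs Nsz (Suc S)" and m: "m < M"
    have lt: "p*M+m < (offs Nsz S + Nsz S) * M"
    proof -
      have "p*M+m < (p+1)*M" using m by simp
      also have "\<dots> \<le> (offs Nsz S + Nsz S)*M" using p by (intro mult_right_mono) (auto simp: offs_Suc)
      finally show ?thesis .
    qed
    show "vcol (map ?F [0..<Suc S]) $ (p*M+m) = w (blk Nsz p) $ m"
    proof (cases "p < offs Nsz S")
      case True
      have "p*M+m < offs Nsz S * M"
      proof -
        have "p*M+m < (p+1)*M" using m by simp
        also have "\<dots> \<le> offs Nsz S*M" using True by (intro mult_right_mono) auto
        finally show ?thesis .
      qed
      have lt': "p*M+m < dim_vec ?v + dim_vec (?F S)" using lt IH(1) dF by (simp add: algebra_simps)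
      have "vcol (map ?F [0..<Suc S]) $ (p*M+m) = ?v $ (p*M+m)"
        unfolding eq using index_append_vec(1)[OF lt'] \<open>p*M+m < offs Nsz S * M\<close> IH(1) by simp
      then show ?thesis using IH(2)[OF True m] by simp
    next
      case False
      then obtain d where d: "p = offs Nsz S + d" and dlt: "d < Nsz S" using p
        by (metis add_diff_inverse_nat add_less_cancel_left offs_Suc)
      have idx: "p*M+m - offs Nsz S * M = d*M + m" using d by (simp add: algebra_simps)
      have ge: "\<not> p*M+m < offs Nsz S * M" using d by (simp add: algebra_simps)
      have dm: "d*M+m < Nsz S * M"
      proof -
        have "d*M+m < (d+1)*M" using m by simp
        also have "\<dots> \<le> Nsz S*M" using dlt by (intro mult_right_mono) auto
        finally show ?thesis .
      qed
      have b: "blk Nsz p = S" using d dlt by (intro blk_eq) (auto simp: offs_Suc)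
      have "vcol (map ?F [0..<Suc S]) $ (p*M+m) = ?F S $ (d*M+m)"
      proof -
        have lt': "p*M+m < dim_vec ?v + dim_vec (?F S)" using lt IH(1) dF by (simp add: algebra_simps)
        show ?thesis
          unfolding eq using index_append_vec(1)[OF lt'] ge idx IH(1) by simp
      qed
      also have "\<dots> = w S $ m" using dm wS m dlt by (simp add: kron_vec_def ones_vec_def)
      finally show ?thesis using b by simp
    qed
  qed
qed

lemma pow_nonneg:
  fixes B :: "real mat"
  assumes B: "B \<in> carrier_mat n n" and nn: "\<forall>i<n. \<forall>j<n. 0 \<le> B$$(i,j)"
  shows "\<forall>i<n. \<forall>j<n. 0 \<le> (B ^\<^sub>m m)$$(i,j)"
proof (induction m)
  case 0 then show ?case using B by (simp add: one_mat_def)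
next
  case (Suc m)
  show ?case
  proof (intro allI impI)
    fix i j assume i: "i < n" and j: "j < n"
    have "(B ^\<^sub>m Suc m)$$(i,j) = (\<Sum>l<n. (B ^\<^sub>m m)$$(i,l) * B$$(l,j))"
      using B i j by (simp add: scalar_prod_def lessThan_atLeast0)
    also have "\<dots> \<ge> 0" using Suc nn i j by (intro sum_nonneg mult_nonneg_nonneg) auto
    finally show "0 \<le> (B ^\<^sub>m Suc m)$$(i,j)" .
  qed
qed

lemma block_zero:
  fixes B :: "real mat" and u :: "nat \<Rightarrow> real"
  assumes B: "B \<in> carrier_mat n n" and nn: "\<forall>i<n. \<forall>j<n. 0 \<le> B$$(i,j)"
    and cs: "\<forall>k<n. (\<Sum>i<n. B$$(i,k)) \<le> 1"
    and b: "b < n" and csb: "(\<Sum>i<n. B$$(i,b)) < 1"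
    and irr: "\<forall>i<n. \<forall>j<n. \<exists>m. (B ^\<^sub>m m)$$(i,j) > 0"
    and u0: "\<forall>i<n. 0 \<le> u i" and sub: "\<forall>i<n. u i \<le> (\<Sum>k<n. B$$(i,k) * u k)"
  shows "\<forall>i<n. u i = 0"
proof -
  have sw: "(\<Sum>i<n. \<Sum>k<n. B$$(i,k) * u k) = (\<Sum>k<n. (\<Sum>i<n. B$$(i,k)) * u k)"
    by (subst sum.swap) (simp add: sum_distrib_right)
  have le1: "(\<Sum>k<n. (\<Sum>i<n. B$$(i,k)) * u k) \<le> (\<Sum>k<n. u k)"
    using cs u0 mult_right_mono[of _ 1] by (intro sum_mono) fastforce
  have le2: "(\<Sum>i<n. u i) \<le> (\<Sum>i<n. \<Sum>k<n. B$$(i,k) * u k)"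
    using sub by (intro sum_mono) auto
  have "(\<Sum>i<n. (\<Sum>k<n. B$$(i,k) * u k) - u i) = 0"
    using sw le1 le2 by (simp add: sum_subtractf)
  then have fx: "\<forall>i<n. u i = (\<Sum>k<n. B$$(i,k) * u k)"
    using sub by (subst (asm) sum_nonneg_eq_0_iff) auto
  have "(\<Sum>k<n. (1 - (\<Sum>i<n. B$$(i,k))) * u k) = 0"
    using sw le1 le2 by (simp add: sum_subtractf left_diff_distrib)
  then have "\<forall>k<n. (1 - (\<Sum>i<n. B$$(i,k))) * u k = 0"
    using cs u0 by (subst (asm) sum_nonneg_eq_0_iff) auto
  then have ub: "u b = 0" using b csb by auto
  have pw: "\<forall>i<n. (\<Sum>k<n. (B ^\<^sub>m m)$$(i,k) * u k) = u i" for m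
  proof (induction m)
    case 0
    show ?case
    proof (intro allI impI)
      fix i assume i: "i < n"
      have "(\<Sum>k<n. (B ^\<^sub>m 0)$$(i,k) * u k) = (\<Sum>k<n. if k = i then u k else 0)"
        using B i by (intro sum.cong refl) auto
      then show "(\<Sum>k<n. (B ^\<^sub>m 0)$$(i,k) * u k) = u i" using i by simp
    qed
  next
    case (Suc m)
    show ?case
    proof (intro allI impI)
      fix i assume i: "i < n"
      have "(\<Sum>k<n. (B ^\<^sub>m Suc m)$$(i,k) * u k) = (\<Sum>k<n. (\<Sum>l<n. (B ^\<^sub>m m)$$(i,l) * B$$(l,k)) * u k)"
        using B i by (intro sum.cong refl) (simp add: scalar_prod_def lessThan_atLeast0)
      also have "\<dots> = (\<Sum>l<n. (B ^\<^sub>m m)$$(i,l) * (\<Sum>k<n. B$$(l,k) * u k))"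
      proof -
        have "(\<Sum>k<n. (\<Sum>l<n. (B ^\<^sub>m m)$$(i,l) * B$$(l,k)) * u k)
            = (\<Sum>k<n. \<Sum>l<n. (B ^\<^sub>m m)$$(i,l) * (B$$(l,k) * u k))"
          by (simp add: sum_distrib_right mult.assoc)
        also have "\<dots> = (\<Sum>l<n. \<Sum>k<n. (B ^\<^sub>m m)$$(i,l) * (B$$(l,k) * u k))"
          by (rule sum.swap)
        also have "\<dots> = (\<Sum>l<n. (B ^\<^sub>m m)$$(i,l) * (\<Sum>k<n. B$$(l,k) * u k))"
          by (simp add: sum_distrib_left)
        finally show ?thesis .
      qed
      also have "\<dots> = (\<Sum>l<n. (B ^\<^sub>m m)$$(i,l) * u l)"
        using fx by (intro sum.cong refl) auto
      also have "\<dots> = u i" using Suc i by auto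
      finally show "(\<Sum>k<n. (B ^\<^sub>m Suc m)$$(i,k) * u k) = u i" .
    qed
  qed
  show ?thesis
  proof (intro allI impI)
    fix a assume a: "a < n"
    obtain m where m: "(B ^\<^sub>m m)$$(b,a) > 0" using irr a b by blast
    have pn: "\<forall>k<n. 0 \<le> (B ^\<^sub>m m)$$(b,k) * u k"
      using pow_nonneg[OF B nn, of m] b u0 by auto
    have "(\<Sum>k<n. (B ^\<^sub>m m)$$(b,k) * u k) = 0" using pw b ub by auto
    then have "(B ^\<^sub>m m)$$(b,a) * u a = 0" using pn a by (subst (asm) sum_nonneg_eq_0_iff) auto
    then show "u a = 0" using m by simp
  qed
qed

lemma sum_split_add: fixes a b :: nat shows "(\<Sum>q<a+b. f q) = (\<Sum>q<a. f q) + (\<Sum>r<b. (f (a+r) :: 'a::comm_monoid_add))"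
  by (induction b) (auto simp: add.assoc)

lemma blocks_zero:
  fixes A :: "real mat"
  assumes A_blocks: "\<forall>i<S+R. \<forall>j<S+R. \<forall>a<Nsz i. \<forall>b<Nsz j.
                     \<not> (i = j \<or> (i < j \<and> S \<le> j)) \<longrightarrow> A $$ (offs Nsz i + a, offs Nsz j + b) = 0"
    and N: "N = offs Nsz (S+R)" and l: "l < N" and k: "k < N"
    and ne: "blk Nsz l \<noteq> blk Nsz k" and nlt: "\<not> (blk Nsz l < blk Nsz k \<and> S \<le> blk Nsz k)"
  shows "A $$ (l,k) = 0"
proof -
  let ?i = "blk Nsz l" and ?j = "blk Nsz k"
  have i: "?i < S+R" "offs Nsz ?i \<le> l" "l < offs Nsz (Suc ?i)" using blk_props[of l Nsz "S+R"] l N by auto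
  have j: "?j < S+R" "offs Nsz ?j \<le> k" "k < offs Nsz (Suc ?j)" using blk_props[of k Nsz "S+R"] k N by auto
  have "A $$ (offs Nsz ?i + (l - offs Nsz ?i), offs Nsz ?j + (k - offs Nsz ?j)) = 0"
    using A_blocks[rule_format, of ?i ?j "l - offs Nsz ?i" "k - offs Nsz ?j"] i j ne nlt by (auto simp: offs_Suc)
  then show ?thesis using i j by simp
qed

lemma colsum:
  assumes A_dim: "A \<in> carrier_mat N N" and A_stoch: "left_stochastic A"
  shows "\<forall>k<N. (\<Sum>l<N. A$$(l,k)) = 1" "\<forall>l<N. \<forall>k<N. 0 \<le> A$$(l,k)"
  using assms by (auto simp: left_stochastic_def nonneg_mat_def)

lemma IT_kernel:
  fixes A :: "real mat"
  assumes N: "N = offs Nsz (S+R)" and NgS: "NgS = offs Nsz S" and NgR: "NgR = N - NgS"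
    and A_dim: "A \<in> carrier_mat N N"
    and A_stoch: "left_stochastic A"
    and A_blocks: "\<forall>i<S+R. \<forall>j<S+R. \<forall>a<Nsz i. \<forall>b<Nsz j.
                     \<not> (i = j \<or> (i < j \<and> S \<le> j)) \<longrightarrow> A $$ (offs Nsz i + a, offs Nsz j + b) = 0"
    and A_R: "\<forall>r\<in>{S..<S+R}. irreducible_mat (subblock A Nsz r) \<and>
                (\<exists>b<Nsz r. (\<Sum>a<Nsz r. subblock A Nsz r $$ (a,b)) < 1)"
    and v: "v \<in> carrier_vec NgR" and ker: "(1\<^sub>m NgR - T_RR A NgS NgR) *\<^sub>v v = 0\<^sub>v NgR"
  shows "v = 0\<^sub>v NgR"
proof -
  let ?T = "T_RR A NgS NgR"
  have T: "?T \<in> carrier_mat NgR NgR" by (simp add: T_RR_def)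
  have NgSN: "NgS \<le> N" using N NgS by (simp add: offs_mono)
  have cs: "\<forall>k<N. (\<Sum>l<N. A$$(l,k)) = 1" and nn: "\<forall>l<N. \<forall>k<N. 0 \<le> A$$(l,k)"
    using colsum[OF A_dim A_stoch] by auto
  have vfix: "\<forall>i<NgR. v$i = (\<Sum>k<NgR. A$$(NgS+i, NgS+k) * v$k)"
  proof (intro allI impI)
    fix i assume i: "i < NgR"
    have "(1\<^sub>m NgR - ?T) *\<^sub>v v = 1\<^sub>m NgR *\<^sub>v v - ?T *\<^sub>v v"
      using minus_mult_distrib_mat_vec[OF one_carrier_mat T v] .
    then have "v - ?T *\<^sub>v v = 0\<^sub>v NgR" using ker v by simp
    then have "v$i - (?T *\<^sub>v v)$i = 0" using i T v
      by (metis carrier_vecD index_minus_vec(1) index_zero_vec(1) mult_mat_vec_carrier)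
    then show "v$i = (\<Sum>k<NgR. A$$(NgS+i, NgS+k) * v$k)"
      using i v by (simp add: T_RR_def scalar_prod_def lessThan_atLeast0)
  qed
  define u where "u p = \<bar>v $ (p - NgS)\<bar>" for p
  have usub: "\<forall>p. NgS \<le> p \<and> p < N \<longrightarrow> u p \<le> (\<Sum>k<NgR. A$$(p, NgS+k) * u (NgS+k))"
  proof (intro allI impI)
    fix p assume p: "NgS \<le> p \<and> p < N"
    then have i: "p - NgS < NgR" using NgR by auto
    have "u p = \<bar>\<Sum>k<NgR. A$$(p, NgS+k) * v$k\<bar>" using vfix i p by (simp add: u_def)
    also have "\<dots> \<le> (\<Sum>k<NgR. \<bar>A$$(p, NgS+k) * v$k\<bar>)" by (rule sum_abs)
    also have "\<dots> = (\<Sum>k<NgR. A$$(p, NgS+k) * u (NgS+k))"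
      using nn p NgR by (intro sum.cong refl) (auto simp: u_def abs_mult)
    finally show "u p \<le> (\<Sum>k<NgR. A$$(p, NgS+k) * u (NgS+k))" .
  qed
  have blockz: "\<forall>a<Nsz j. u (offs Nsz j + a) = 0" if "S \<le> j" "j < S+R" for j
    using that
  proof (induction "S+R-j" arbitrary: j rule: less_induct)
    case less
    note j = less.prems
    let ?B = "subblock A Nsz j"
    let ?n = "Nsz j"
    have jN: "offs Nsz j + ?n \<le> N" using j N offs_mono[of "Suc j" "S+R" Nsz] by (simp add: offs_Suc)
    have jS: "NgS \<le> offs Nsz j" using j NgS offs_mono by auto
    have B: "?B \<in> carrier_mat ?n ?n" by (simp add: subblock_def)
    have Bidx: "\<And>a b. a < ?n \<Longrightarrow> b < ?n \<Longrightarrow> ?B $$ (a,b) = A $$ (offs Nsz j + a, offs Nsz j + b)"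
      by (simp add: subblock_def)
    have irr: "irreducible_mat ?B" and defi: "\<exists>b<?n. (\<Sum>a<?n. ?B $$ (a,b)) < 1" using A_R j by auto
    have Bnn: "\<forall>i<?n. \<forall>k<?n. 0 \<le> ?B$$(i,k)" using irr B by (auto simp: irreducible_mat_def nonneg_mat_def)
    have Birr: "\<forall>i<?n. \<forall>k<?n. \<exists>m. (?B ^\<^sub>m m)$$(i,k) > 0" using irr B by (auto simp: irreducible_mat_def)
    have Bcs: "\<forall>k<?n. (\<Sum>i<?n. ?B$$(i,k)) \<le> 1"
    proof (intro allI impI)
      fix k assume k: "k < ?n"
      have "(\<Sum>i<?n. ?B$$(i,k)) = (\<Sum>i<?n. A$$(offs Nsz j + i, offs Nsz j + k))"
        using k Bidx by simp
      also have "\<dots> = (\<Sum>l\<in>(\<lambda>i. offs Nsz j + i) ` {..<?n}. A$$(l, offs Nsz j + k))"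
        by (simp add: sum.reindex)
      also have "\<dots> \<le> (\<Sum>l<N. A$$(l, offs Nsz j + k))"
        using jN k nn by (intro sum_mono2) auto
      also have "\<dots> = 1" using cs jN k by simp
      finally show "(\<Sum>i<?n. ?B$$(i,k)) \<le> 1" .
    qed
    obtain b where b: "b < ?n" "(\<Sum>a<?n. ?B $$ (a,b)) < 1" using defi by blast
    have bsub: "\<forall>a<?n. u (offs Nsz j + a) \<le> (\<Sum>k<?n. ?B$$(a,k) * u (offs Nsz j + k))"
    proof (intro allI impI)
      fix a assume a: "a < ?n"
      let ?p = "offs Nsz j + a"
      have p: "NgS \<le> ?p \<and> ?p < N" using jS jN a by auto
      have bp: "blk Nsz ?p = j" using a by (intro blk_eq) (auto simp: offs_Suc)
      have "u ?p \<le> (\<Sum>k<NgR. A$$(?p, NgS+k) * u (NgS+k))" using usub p by blast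
      also have "\<dots> = (\<Sum>q\<in>(\<lambda>k. NgS+k) ` {..<NgR}. A$$(?p, q) * u q)"
        by (simp add: sum.reindex)
      also have "\<dots> = (\<Sum>q\<in>(\<lambda>k. offs Nsz j+k) ` {..<?n}. A$$(?p, q) * u q)"
      proof (rule sum.mono_neutral_right)
        show "finite ((\<lambda>k. NgS+k) ` {..<NgR})" by simp
        show "(\<lambda>k. offs Nsz j+k) ` {..<?n} \<subseteq> (\<lambda>k. NgS+k) ` {..<NgR}"
        proof
          fix q assume "q \<in> (\<lambda>k. offs Nsz j+k) ` {..<?n}"
          then have "NgS \<le> q" "q < N" using jS jN by auto
          then show "q \<in> (\<lambda>k. NgS+k) ` {..<NgR}" using NgR
            by (intro image_eqI[of _ _ "q - NgS"]) auto
        qed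
        show "\<forall>q\<in>(\<lambda>k. NgS+k) ` {..<NgR} - (\<lambda>k. offs Nsz j+k) ` {..<?n}. A$$(?p, q) * u q = 0"
        proof
          fix q assume q: "q \<in> (\<lambda>k. NgS+k) ` {..<NgR} - (\<lambda>k. offs Nsz j+k) ` {..<?n}"
          then have qN: "NgS \<le> q" "q < N" using NgR NgSN by auto
          have bq: "blk Nsz q < S+R" "offs Nsz (blk Nsz q) \<le> q" "q < offs Nsz (Suc (blk Nsz q))"
            using blk_props[of q Nsz "S+R"] qN N by auto
          have bqS: "S \<le> blk Nsz q"
          proof (rule ccontr)
            assume "\<not> S \<le> blk Nsz q"
            then have "offs Nsz (Suc (blk Nsz q)) \<le> offs Nsz S" by (intro offs_mono) auto
            then show False using bq qN NgS by simp
          qed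
          have bqj: "blk Nsz q \<noteq> j"
          proof
            assume "blk Nsz q = j"
            then have "q \<in> (\<lambda>k. offs Nsz j+k) ` {..<?n}" using bq
              by (intro image_eqI[of _ _ "q - offs Nsz j"]) (auto simp: offs_Suc)
            then show False using q by blast
          qed
          show "A$$(?p, q) * u q = 0"
          proof (cases "blk Nsz q < j")
            case True
            have "A$$(?p, q) = 0"
              by (rule blocks_zero[OF A_blocks N]) (use p qN bp True in auto)
            then show ?thesis by simp
          next
            case False
            then have gt: "j < blk Nsz q" using bqj by simp
            have "S + R - blk Nsz q < S + R - j" using gt bq by simp
            then have "\<forall>a<Nsz (blk Nsz q). u (offs Nsz (blk Nsz q) + a) = 0"
              using less.hyps bqS bq by blast
            moreover have "q - offs Nsz (blk Nsz q) < Nsz (blk Nsz q)" using bq by (simp add: offs_Suc)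
            ultimately have "u q = 0" using bq
              by (metis le_add_diff_inverse)
            then show ?thesis by simp
          qed
        qed
      qed
      also have "\<dots> = (\<Sum>k<?n. A$$(?p, offs Nsz j + k) * u (offs Nsz j + k))"
        by (simp add: sum.reindex)
      also have "\<dots> = (\<Sum>k<?n. ?B$$(a,k) * u (offs Nsz j + k))"
        using a Bidx by simp
      finally show "u ?p \<le> (\<Sum>k<?n. ?B$$(a,k) * u (offs Nsz j + k))" .
    qed
    show ?case
      by (rule block_zero[OF B Bnn Bcs b Birr, of "\<lambda>a. u (offs Nsz j + a)"]) (use bsub in \<open>auto simp: u_def\<close>)
  qed
  show ?thesis
  proof (rule eq_vecI)
    show "dim_vec v = dim_vec (0\<^sub>v NgR)" using v by simp
    fix i assume "i < dim_vec (0\<^sub>v NgR)"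
    then have i: "i < NgR" by simp
    let ?p = "NgS + i"
    have pN: "?p < N" using i NgR by simp
    have bq: "blk Nsz ?p < S+R" "offs Nsz (blk Nsz ?p) \<le> ?p" "?p < offs Nsz (Suc (blk Nsz ?p))"
      using blk_props[of ?p Nsz "S+R"] pN N by auto
    have bqS: "S \<le> blk Nsz ?p"
    proof (rule ccontr)
      assume "\<not> S \<le> blk Nsz ?p"
      then have "offs Nsz (Suc (blk Nsz ?p)) \<le> offs Nsz S" by (intro offs_mono) auto
      then show False using bq NgS by simp
    qed
    have "u (offs Nsz (blk Nsz ?p) + (?p - offs Nsz (blk Nsz ?p))) = 0"
      using blockz[OF bqS bq(1), rule_format, of "?p - offs Nsz (blk Nsz ?p)"] bq by (simp add: offs_Suc)
    then have "u ?p = 0" using bq by simp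
    then show "v $ i = 0\<^sub>v NgR $ i" using i by (simp add: u_def)
  qed
qed

lemma kron_dims: "dim_row (kron_mat A B) = dim_row A * dim_row B" "dim_col (kron_mat A B) = dim_col A * dim_col B"
  by (simp_all add: kron_mat_def)

lemma tE_mult:
  fixes T :: "real mat"
  assumes T: "T \<in> carrier_mat n n" and d: "d \<in> carrier_vec n" and r: "r < n"
  shows "(transpose_mat (1\<^sub>m n - T) *\<^sub>v d) $ r = d$r - (\<Sum>k<n. T$$(k,r) * d$k)"
proof -
  have "(transpose_mat (1\<^sub>m n - T) *\<^sub>v d) $ r = (\<Sum>k\<in>{0..<n}. (1\<^sub>m n - T)$$(k,r) * d$k)"
    using T d r by (simp add: scalar_prod_def)
  also have "\<dots> = (\<Sum>k<n. (if k = r then d$k else 0) - T$$(k,r) * d$k)"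
    using T r by (intro sum.cong) (auto simp: lessThan_atLeast0 left_diff_distrib)
  also have "\<dots> = d$r - (\<Sum>k<n. T$$(k,r) * d$k)"
    using r by (simp add: sum_subtractf)
  finally show ?thesis .
qed

theorem lemma2:
  fixes S R M N NgS NgR :: nat and Nsz :: "nat \<Rightarrow> nat"
    and A :: "real mat" and w :: "nat \<Rightarrow> real vec"
  assumes S_pos: "S \<ge> 1"
    and Nsz_pos: "\<forall>j<S+R. Nsz j > 0"
    and N_def: "N = (\<Sum>j<S+R. Nsz j)"
    and NgS_def: "NgS = (\<Sum>j<S. Nsz j)"
    and NgR_def: "NgR = (\<Sum>j\<in>{S..<S+R}. Nsz j)"
    and A_dim: "A \<in> carrier_mat N N"
    and A_stoch: "left_stochastic A"
    and A_blocks: "\<forall>i<S+R. \<forall>j<S+R. \<forall>a<Nsz i. \<forall>b<Nsz j.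
                     \<not> (i = j \<or> (i < j \<and> S \<le> j)) \<longrightarrow> A $$ (offs Nsz i + a, offs Nsz j + b) = 0"
    and A_S: "\<forall>s<S. left_stochastic (subblock A Nsz s) \<and> primitive_mat (subblock A Nsz s)"
    and A_R: "\<forall>r\<in>{S..<S+R}. irreducible_mat (subblock A Nsz r) \<and>
                (\<exists>b<Nsz r. (\<Sum>a<Nsz r. subblock A Nsz r $$ (a,b)) < 1)"
    and w_dim: "\<forall>s<S. w s \<in> carrier_vec M"
  shows "let \<A> = kron_mat A (1\<^sub>m M);
             \<W> = kron_mat (W_mat A NgS NgR) (1\<^sub>m M);
             \<omega>star = vcol (map (\<lambda>s. kron_vec (ones_vec (Nsz s)) (w s)) [0..<S]);
             \<omega>bullet = transpose_mat \<W> *\<^sub>v \<omega>star;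
             \<omega>inf = \<omega>star @\<^sub>v \<omega>bullet
         in \<omega>inf = transpose_mat \<A> *\<^sub>v \<omega>inf \<and>
            (\<forall>x \<in> carrier_vec (N * M).
               x = transpose_mat \<A> *\<^sub>v x \<and> (\<forall>i < NgS * M. x $ i = \<omega>star $ i) \<longrightarrow> x = \<omega>inf)"
proof -
  have Noffs: "N = offs Nsz (S+R)" using N_def by (simp add: offs_def)
  have NgSoffs: "NgS = offs Nsz S" using NgS_def by (simp add: offs_def)
  have NN: "N = NgS + NgR"
    unfolding N_def NgS_def NgR_def by (simp add: lessThan_atLeast0 sum.atLeastLessThan_concat)
  have NgR: "NgR = N - NgS" using NN by simp
  let ?T = "T_RR A NgS NgR"
  let ?Tsr = "T_SR A NgS NgR"
  let ?E = "1\<^sub>m NgR - ?T"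
  have T: "?T \<in> carrier_mat NgR NgR" by (simp add: T_RR_def)
  have Tsr: "?Tsr \<in> carrier_mat NgS NgR" by (simp add: T_SR_def)
  have E: "?E \<in> carrier_mat NgR NgR" using T by (rule minus_carrier_mat)
  have detE: "det ?E \<noteq> 0"
    using det_0_iff_vec_prod_zero_field[OF E]
      IT_kernel[OF Noffs NgSoffs NgR A_dim A_stoch A_blocks A_R] by auto
  have "mat_inverse ?E \<noteq> None"
    using mat_inverse(1)[OF E, of "()"] det_non_zero_imp_unit[OF E detE, of "()"] by blast
  then obtain Q where Qdef: "mat_inverse ?E = Some Q" by blast
  have QE: "?E * Q = 1\<^sub>m NgR" "Q * ?E = 1\<^sub>m NgR" "Q \<in> carrier_mat NgR NgR"
    using mat_inverse(2)[OF E Qdef] by auto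
  have Wm: "W_mat A NgS NgR = ?Tsr * Q" by (simp add: W_mat_def Qdef)
  have WmC: "?Tsr * Q \<in> carrier_mat NgS NgR" using Tsr QE by simp
  have cs: "\<forall>k<N. (\<Sum>l<N. A$$(l,k)) = 1" using colsum[OF A_dim A_stoch] by auto
  define AA where "AA = kron_mat A (1\<^sub>m M)"
  define WW where "WW = kron_mat (W_mat A NgS NgR) (1\<^sub>m M)"
  define ws where "ws = vcol (map (\<lambda>s. kron_vec (ones_vec (Nsz s)) (w s)) [0..<S])"
  define wb where "wb = transpose_mat WW *\<^sub>v ws"
  define winf where "winf = ws @\<^sub>v wb"
  have ws_dim: "dim_vec ws = NgS * M" and ws_idx: "\<And>p m. p < NgS \<Longrightarrow> m < M \<Longrightarrow> ws $ (p*M+m) = w (blk Nsz p) $ m"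
    using omega_star[OF w_dim, of Nsz] unfolding ws_def NgSoffs by auto
  have wsC: "ws \<in> carrier_vec (NgS*M)" by (rule carrier_vecI[OF ws_dim])
  have wb_dim: "dim_vec wb = NgR * M"
  proof -
    have "dim_col (?Tsr * Q) = NgR" using QE(3) by simp
    then show ?thesis unfolding wb_def WW_def Wm by (simp only: dim_mult_mat_vec index_transpose_mat kron_dims index_one_mat)
  qed
  have winf_dim: "dim_vec winf = N * M" unfolding winf_def index_append_vec(2) ws_dim wb_dim NN
    by (simp only: add_mult_distrib)
  have AAC: "transpose_mat AA \<in> carrier_mat (N*M) (N*M)"
    using A_dim unfolding AA_def carrier_mat_def by (simp add: kron_dims)
  define ys where "ys m = vec NgS (\<lambda>q. ws $ (q*M+m))" for m
  define cv where "cv m = transpose_mat ?Tsr *\<^sub>v ys m" for m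
  define vb where "vb m = transpose_mat Q *\<^sub>v cv m" for m
  have ysC: "ys m \<in> carrier_vec NgS" for m unfolding ys_def by (rule vec_carrier)
  have cvC: "cv m \<in> carrier_vec NgR" for m
    unfolding cv_def by (rule mult_mat_vec_carrier[OF _ ysC]) (simp only: transpose_carrier_mat Tsr)
  have vbC: "vb m \<in> carrier_vec NgR" for m
    unfolding vb_def by (rule mult_mat_vec_carrier[OF _ cvC]) (simp only: transpose_carrier_mat QE(3))
  have wb_idx: "wb $ (r*M+m) = vb m $ r" if r: "r < NgR" and m: "m < M" for r m
  proof -
    have "wb $ (r*M+m) = (\<Sum>q<NgS. (?Tsr * Q)$$(q,r) * ws$(q*M+m))"
      unfolding wb_def WW_def Wm by (rule kron_tmult[OF WmC wsC r m])
    also have "\<dots> = (transpose_mat (?Tsr * Q) *\<^sub>v ys m) $ r"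
    proof -
      have d: "dim_row (?Tsr * Q) = NgS" "dim_col (?Tsr * Q) = NgR" using WmC by auto
      show ?thesis using d r by (simp add: scalar_prod_def ys_def lessThan_atLeast0)
    qed
    also have "transpose_mat (?Tsr * Q) *\<^sub>v ys m = vb m"
    proof -
      have cQ: "transpose_mat Q \<in> carrier_mat NgR NgR" using QE(3) by simp
      have cT: "transpose_mat ?Tsr \<in> carrier_mat NgR NgS" using Tsr by simp
      show ?thesis unfolding vb_def cv_def transpose_mult[OF Tsr QE(3)]
        by (rule assoc_mult_mat_vec[OF cQ cT ysC])
    qed
    finally show ?thesis .
  qed
  have KEY: "vb m $ r = (\<Sum>q<NgS. A$$(q, NgS+r) * ys m $ q) + (\<Sum>k<NgR. A$$(NgS+k, NgS+r) * vb m $ k)"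
    if r: "r < NgR" for r m
  proof -
    have "transpose_mat ?E *\<^sub>v vb m = (transpose_mat ?E * transpose_mat Q) *\<^sub>v cv m"
    proof -
      have cQ: "transpose_mat Q \<in> carrier_mat NgR NgR" using QE(3) by simp
      have cE: "transpose_mat ?E \<in> carrier_mat NgR NgR" using E by simp
      show ?thesis unfolding vb_def by (rule assoc_mult_mat_vec[OF cE cQ cvC, symmetric])
    qed
    also have "transpose_mat ?E * transpose_mat Q = 1\<^sub>m NgR"
      using transpose_mult[OF QE(3) E] QE(2) by simp
    finally have eq: "transpose_mat ?E *\<^sub>v vb m = cv m" using cvC by simp
    have "(transpose_mat ?E *\<^sub>v vb m) $ r = vb m $ r - (\<Sum>k<NgR. ?T$$(k,r) * vb m $ k)"
      by (rule tE_mult[OF T vbC r])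
    moreover have "cv m $ r = (\<Sum>q<NgS. A$$(q, NgS+r) * ys m $ q)"
      using Tsr r carrier_vecD[OF ysC[of m]] by (auto simp: cv_def scalar_prod_def T_SR_def lessThan_atLeast0 intro!: sum.cong)
    moreover have "(\<Sum>k<NgR. ?T$$(k,r) * vb m $ k) = (\<Sum>k<NgR. A$$(NgS+k, NgS+r) * vb m $ k)"
      using r by (auto simp: T_RR_def intro!: sum.cong)
    ultimately show ?thesis using eq by simp
  qed
  have decomp: "\<exists>p m. i = p*M+m \<and> p < N \<and> m < M" if "i < N*M" for i
  proof -
    have M: "M > 0" using that by (cases M) auto
    have "i div M < N" using that by (simp add: less_mult_imp_div_less)
    then show ?thesis using M by (intro exI[of _ "i div M"] exI[of _ "i mod M"]) auto
  qed
  have ys_idx: "ys m $ q = ws $ (q*M+m)" if "q < NgS" for q m using that by (simp add: ys_def)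
  have winf_S: "winf $ (p*M+m) = ws $ (p*M+m)" if "p < NgS" "m < M" for p m
  proof -
    have lt: "p*M+m < NgS*M"
    proof -
      have "p*M+m < (p+1)*M" using that by simp
      also have "\<dots> \<le> NgS*M" using that by (intro mult_right_mono) auto
      finally show ?thesis .
    qed
    then show ?thesis using ws_dim wb_dim by (simp add: winf_def)
  qed
  have winf_R: "winf $ ((NgS+r)*M+m) = vb m $ r" if "r < NgR" "m < M" for r m
  proof -
    have lt: "r*M+m < NgR*M"
    proof -
      have "r*M+m < (r+1)*M" using that by simp
      also have "\<dots> \<le> NgR*M" using that by (intro mult_right_mono) auto
      finally show ?thesis .
    qed
    have "winf $ ((NgS+r)*M+m) = wb $ (r*M+m)"
      using ws_dim wb_dim lt by (simp add: winf_def algebra_simps)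
    then show ?thesis using wb_idx that by simp
  qed
  have AAmult: "(transpose_mat AA *\<^sub>v x) $ (p*M+m) = (\<Sum>q<N. A$$(q,p) * x$(q*M+m))"
    if "x \<in> carrier_vec (N*M)" "p < N" "m < M" for x p m
    unfolding AA_def by (rule kron_tmult[OF A_dim that])
  have winfC: "winf \<in> carrier_vec (N*M)" by (rule carrier_vecI[OF winf_dim])
  have part1: "winf = transpose_mat AA *\<^sub>v winf"
  proof (rule eq_vecI)
    show "dim_vec winf = dim_vec (transpose_mat AA *\<^sub>v winf)" using winf_dim AAC by simp
    fix i assume "i < dim_vec (transpose_mat AA *\<^sub>v winf)"
    then have "i < N*M" using AAC by simp
    then obtain p m where i: "i = p*M+m" and p: "p < N" and m: "m < M" using decomp by blast
    have rhs: "(transpose_mat AA *\<^sub>v winf) $ i = (\<Sum>q<N. A$$(q,p) * winf$(q*M+m))"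
      unfolding i by (rule AAmult[OF winfC p m])
    show "winf $ i = (transpose_mat AA *\<^sub>v winf) $ i"
    proof (cases "p < NgS")
      case True
      have bp: "blk Nsz p < S" using blk_props[of p Nsz S] True NgSoffs by auto
      have "(\<Sum>q<N. A$$(q,p) * winf$(q*M+m)) = (\<Sum>q<N. A$$(q,p) * winf$(p*M+m))"
      proof (intro sum.cong refl)
        fix q assume q: "q \<in> {..<N}"
        show "A$$(q,p) * winf$(q*M+m) = A$$(q,p) * winf$(p*M+m)"
        proof (cases "blk Nsz q = blk Nsz p")
          case True
          have qS: "q < NgS"
          proof (rule ccontr)
            assume "\<not> q < NgS"
            then have "offs Nsz S \<le> q" using NgSoffs by simp
            moreover have "q < offs Nsz (Suc (blk Nsz q))" using blk_props[of q Nsz "S+R"] q Noffs by auto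
            moreover have "offs Nsz (Suc (blk Nsz q)) \<le> offs Nsz S" using True bp by (intro offs_mono) auto
            ultimately show False by simp
          qed
          show ?thesis using winf_S[OF qS m] winf_S[OF \<open>p < NgS\<close> m] ws_idx[OF qS m] ws_idx[OF \<open>p < NgS\<close> m] True
            by simp
        next
          case False
          have "A$$(q,p) = 0"
            by (rule blocks_zero[OF A_blocks Noffs]) (use q p False bp in auto)
          then show ?thesis by simp
        qed
      qed
      also have "\<dots> = winf$(p*M+m)" using cs p by (simp add: sum_distrib_right[symmetric])
      finally show ?thesis using rhs i by simp
    next
      case False
      then obtain r where r: "p = NgS + r" "r < NgR" using p NN by (metis add_diff_inverse_nat nat_add_left_cancel_less)
      have "(\<Sum>q<N. A$$(q,p) * winf$(q*M+m))
          = (\<Sum>q<NgS. A$$(q,p) * winf$(q*M+m)) + (\<Sum>k<NgR. A$$(NgS+k,p) * winf$((NgS+k)*M+m))"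
        unfolding NN by (rule sum_split_add)
      also have "\<dots> = (\<Sum>q<NgS. A$$(q, NgS+r) * ys m $ q) + (\<Sum>k<NgR. A$$(NgS+k, NgS+r) * vb m $ k)"
        using winf_S winf_R ys_idx m r by (auto intro!: sum.cong arg_cong2[where f="(+)"])
      also have "\<dots> = vb m $ r" using KEY[OF r(2)] by simp
      finally show ?thesis using rhs i r winf_R[OF r(2) m] by simp
    qed
  qed
  have part2: "\<forall>x \<in> carrier_vec (N * M).
               x = transpose_mat AA *\<^sub>v x \<and> (\<forall>i < NgS * M. x $ i = ws $ i) \<longrightarrow> x = winf"
  proof (intro ballI impI)
    fix x assume xC: "x \<in> carrier_vec (N*M)" and hx: "x = transpose_mat AA *\<^sub>v x \<and> (\<forall>i < NgS * M. x $ i = ws $ i)"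
    have xS: "x $ (q*M+m) = ws $ (q*M+m)" if "q < NgS" "m < M" for q m
    proof -
      have "q*M+m < (q+1)*M" using that by simp
      also have "\<dots> \<le> NgS*M" using that by (intro mult_right_mono) auto
      finally show ?thesis using hx by blast
    qed
    have xR: "x $ ((NgS+r)*M+m) = vb m $ r" if r: "r < NgR" and m: "m < M" for r m
    proof -
      define z where "z = vec NgR (\<lambda>k. x $ ((NgS+k)*M+m))"
      have zC: "z \<in> carrier_vec NgR" by (simp add: z_def)
      have zeq: "z $ k = (\<Sum>q<NgS. A$$(q, NgS+k) * ys m $ q) + (\<Sum>k'<NgR. A$$(NgS+k', NgS+k) * z $ k')"
        if k: "k < NgR" for k
      proof -
        have "z $ k = (transpose_mat AA *\<^sub>v x) $ ((NgS+k)*M+m)" using hx k by (simp add: z_def)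
        also have "\<dots> = (\<Sum>q<N. A$$(q,NgS+k) * x$(q*M+m))"
          using AAmult[OF xC _ m] k NN by simp
        also have "\<dots> = (\<Sum>q<NgS. A$$(q,NgS+k) * x$(q*M+m)) + (\<Sum>k'<NgR. A$$(NgS+k',NgS+k) * x$((NgS+k')*M+m))"
          unfolding NN by (rule sum_split_add)
        also have "\<dots> = (\<Sum>q<NgS. A$$(q, NgS+k) * ys m $ q) + (\<Sum>k'<NgR. A$$(NgS+k', NgS+k) * z $ k')"
          using xS ys_idx m by (auto simp: z_def intro!: sum.cong arg_cong2[where f="(+)"])
        finally show ?thesis .
      qed
      define d where "d = z - vb m"
      have dC: "d \<in> carrier_vec NgR" using zC vbC by (simp add: d_def)
      have dfix: "d $ k = (\<Sum>k'<NgR. A$$(NgS+k', NgS+k) * d $ k')" if k: "k < NgR" for k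
      proof -
        have "d $ k = z $ k - vb m $ k" using k carrier_vecD[OF zC] carrier_vecD[OF vbC[of m]] by (simp add: d_def)
        also have "\<dots> = (\<Sum>k'<NgR. A$$(NgS+k', NgS+k) * z $ k') - (\<Sum>k'<NgR. A$$(NgS+k', NgS+k) * vb m $ k')"
          using zeq[OF k] KEY[OF k, of m] by simp
        also have "\<dots> = (\<Sum>k'<NgR. A$$(NgS+k', NgS+k) * d $ k')"
          using carrier_vecD[OF zC] carrier_vecD[OF vbC[of m]] by (simp add: d_def sum_subtractf[symmetric] right_diff_distrib)
        finally show ?thesis .
      qed
      have "transpose_mat ?E *\<^sub>v d = 0\<^sub>v NgR"
      proof (rule eq_vecI)
        show "dim_vec (transpose_mat ?E *\<^sub>v d) = dim_vec (0\<^sub>v NgR)" using E T by simp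
        fix k assume "k < dim_vec (0\<^sub>v NgR)"
        then have k: "k < NgR" by simp
        have "(transpose_mat ?E *\<^sub>v d) $ k = d$k - (\<Sum>k'<NgR. ?T$$(k',k) * d$k')"
          by (rule tE_mult[OF T dC k])
        also have "(\<Sum>k'<NgR. ?T$$(k',k) * d$k') = (\<Sum>k'<NgR. A$$(NgS+k', NgS+k) * d $ k')"
          using k by (auto simp: T_RR_def intro!: sum.cong)
        finally show "(transpose_mat ?E *\<^sub>v d) $ k = 0\<^sub>v NgR $ k" using dfix[OF k] k by simp
      qed
      then have "transpose_mat Q *\<^sub>v (transpose_mat ?E *\<^sub>v d) = 0\<^sub>v NgR" using QE(3) by (auto intro!: eq_vecI simp: scalar_prod_def)
      moreover have "transpose_mat Q *\<^sub>v (transpose_mat ?E *\<^sub>v d) = d"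
      proof -
        have "transpose_mat Q *\<^sub>v (transpose_mat ?E *\<^sub>v d) = (transpose_mat Q * transpose_mat ?E) *\<^sub>v d"
        proof -
          have cQ: "transpose_mat Q \<in> carrier_mat NgR NgR" using QE(3) by simp
          have cE: "transpose_mat ?E \<in> carrier_mat NgR NgR" using E by simp
          show ?thesis by (rule assoc_mult_mat_vec[OF cQ cE dC, symmetric])
        qed
        also have "transpose_mat Q * transpose_mat ?E = 1\<^sub>m NgR"
          using transpose_mult[OF E QE(3)] QE(1) by simp
        finally show ?thesis using dC by simp
      qed
      ultimately have "d = 0\<^sub>v NgR" by simp
      then have "z $ r = vb m $ r" using r zC vbC[of m] unfolding d_def
        by (metis carrier_vecD index_minus_vec(1) index_zero_vec(1) eq_iff_diff_eq_0)
      then show ?thesis using r by (simp add: z_def)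
    qed
    show "x = winf"
    proof (rule eq_vecI)
      show "dim_vec x = dim_vec winf" using xC winf_dim by simp
      fix i assume "i < dim_vec winf"
      then have "i < N*M" using winf_dim by simp
      then obtain p m where i: "i = p*M+m" and p: "p < N" and m: "m < M" using decomp by blast
      show "x $ i = winf $ i"
      proof (cases "p < NgS")
        case True
        then show ?thesis using xS[OF True m] winf_S[OF True m] i by simp
      next
        case False
        then obtain r where r: "p = NgS + r" "r < NgR" using p NN by (metis add_diff_inverse_nat nat_add_left_cancel_less)
        then show ?thesis using xR[OF r(2) m] winf_R[OF r(2) m] i by simp
      qed
    qed
  qed
  show ?thesis
    unfolding Let_def AA_def[symmetric] WW_def[symmetric] ws_def[symmetric]
    unfolding wb_def[symmetric]
    unfolding winf_def[symmetric]
    using part1 part2 by (rule conjI)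
qed

end
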